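(* Let $G=H\oplus_2 K$ be a $2$-sum of $2$-connected cubic graphs $H$ and $K$, where $K$ is $3$-edge-colourable. Then $\pi(G)\ge 5$ if and only if $\pi(H)\ge 5$.
   Context: Graphs are finite; loops and multiple edges are allowed. For a bridgeless cubic graph $G$, the perfect matching index $\pi(G)$ is the smallest number of perfect matchings of $G$ whose union is $E(G)$. A $2$-sum $H\oplus_2 K$ with distinguished edges $e\in E(H)$, $f\in E(K)$ is obtained by deleting $e$ and $f$ and joining the two $2$-valent vertices of $H-e$ to the two $2$-valent vertices of $K-f$ by two new independent edges. *)

theory Defs
  imports Main
begin

text \<open>Finite multigraphs with loops and multiple edges. Each edge has an (unordered)
  pair of ends, stored as an ordered pair; a loop has equal ends.\<close>

record ('v, 'e) mgraph =
  verts :: "'v set"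
  edges :: "'e set"
  ends  :: "'e \<Rightarrow> 'v \<times> 'v"

definition mgraph :: "('v, 'e) mgraph \<Rightarrow> bool" where
  "mgraph G \<longleftrightarrow> finite (verts G) \<and> finite (edges G) \<and>
     (\<forall>e \<in> edges G. fst (ends G e) \<in> verts G \<and> snd (ends G e) \<in> verts G)"

definition incident :: "('v, 'e) mgraph \<Rightarrow> 'v \<Rightarrow> 'e \<Rightarrow> bool" where
  "incident G v e \<longleftrightarrow> fst (ends G e) = v \<or> snd (ends G e) = v"

definition is_loop :: "('v, 'e) mgraph \<Rightarrow> 'e \<Rightarrow> bool" where
  "is_loop G e \<longleftrightarrow> fst (ends G e) = snd (ends G e)"

text \<open>Degree: a loop contributes 2.\<close>
definition degree :: "('v, 'e) mgraph \<Rightarrow> 'v \<Rightarrow> nat" where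
  "degree G v = card {e \<in> edges G. fst (ends G e) = v} + card {e \<in> edges G. snd (ends G e) = v}"

definition cubic :: "('v, 'e) mgraph \<Rightarrow> bool" where
  "cubic G \<longleftrightarrow> mgraph G \<and> (\<forall>v \<in> verts G. degree G v = 3)"

definition adj_rel :: "('v, 'e) mgraph \<Rightarrow> ('v \<times> 'v) set" where
  "adj_rel G = {(u, v). \<exists>e \<in> edges G. ends G e = (u, v) \<or> ends G e = (v, u)}"

definition connected :: "('v, 'e) mgraph \<Rightarrow> bool" where
  "connected G \<longleftrightarrow> verts G \<noteq> {} \<and> (\<forall>u \<in> verts G. \<forall>v \<in> verts G. (u, v) \<in> (adj_rel G)\<^sup>*)"

definition del_vertex :: "('v, 'e) mgraph \<Rightarrow> 'v \<Rightarrow> ('v, 'e) mgraph" where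
  "del_vertex G v = \<lparr> verts = verts G - {v}, edges = {e \<in> edges G. \<not> incident G v e},
                      ends = ends G \<rparr>"

text \<open>2-connected: connected, at least two vertices, no cut vertex, and no loops
  (a loop in a graph with an edge elsewhere makes it separable).\<close>
definition two_connected :: "('v, 'e) mgraph \<Rightarrow> bool" where
  "two_connected G \<longleftrightarrow> connected G \<and> card (verts G) \<ge> 2 \<and>
     (\<forall>e \<in> edges G. \<not> is_loop G e) \<and>
     (\<forall>v \<in> verts G. connected (del_vertex G v))"

definition perfect_matching :: "('v, 'e) mgraph \<Rightarrow> 'e set \<Rightarrow> bool" where
  "perfect_matching G M \<longleftrightarrow> M \<subseteq> edges G \<and> (\<forall>e \<in> M. \<not> is_loop G e) \<and>
     (\<forall>v \<in> verts G. card {e \<in> M. incident G v e} = 1)"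

definition pm_index :: "('v, 'e) mgraph \<Rightarrow> nat" where
  "pm_index G = (LEAST k. \<exists>Ms. finite Ms \<and> card Ms = k \<and>
      (\<forall>M \<in> Ms. perfect_matching G M) \<and> \<Union> Ms = edges G)"

definition three_edge_colourable :: "('v, 'e) mgraph \<Rightarrow> bool" where
  "three_edge_colourable G \<longleftrightarrow> (\<exists>c :: 'e \<Rightarrow> nat. (\<forall>e \<in> edges G. c e < 3 \<and> \<not> is_loop G e) \<and>
     (\<forall>e \<in> edges G. \<forall>e' \<in> edges G. e \<noteq> e' \<and> (\<exists>v. incident G v e \<and> incident G v e')
        \<longrightarrow> c e \<noteq> c e'))"

definition two_sum :: "('v, 'e) mgraph \<Rightarrow> 'e \<Rightarrow> ('w, 'f) mgraph \<Rightarrow> 'f \<Rightarrow> bool \<Rightarrow>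
    ('v + 'w, ('e + 'f) + bool) mgraph" where
  "two_sum H e K f s =
    (let (a, b) = ends H e; (c, d) = ends K f in
     \<lparr> verts = Inl ` verts H \<union> Inr ` verts K,
       edges = Inl ` (Inl ` (edges H - {e}) \<union> Inr ` (edges K - {f})) \<union> {Inr True, Inr False},
       ends = (\<lambda>x. case x of
                Inl (Inl h) \<Rightarrow> map_prod Inl Inl (ends H h)
              | Inl (Inr k) \<Rightarrow> map_prod Inr Inr (ends K k)
              | Inr True \<Rightarrow> (Inl a, Inr (if s then c else d))
              | Inr False \<Rightarrow> (Inl b, Inr (if s then d else c))) \<rparr>)"

end

theory Submission
  imports Defs
begin
lemma ts_basic:
  assumes "ends H e = (a,b)" "ends K f = (c,d)"
  shows "verts (two_sum H e K f s) = Inl ` verts H \<union> Inr ` verts K"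
    "edges (two_sum H e K f s) = Inl ` (Inl ` (edges H - {e}) \<union> Inr ` (edges K - {f})) \<union> {Inr True, Inr False}"
    "ends (two_sum H e K f s) (Inl (Inl h)) = map_prod Inl Inl (ends H h)"
    "ends (two_sum H e K f s) (Inl (Inr k)) = map_prod Inr Inr (ends K k)"
    "ends (two_sum H e K f s) (Inr True) = (Inl a, Inr (if s then c else d))"
    "ends (two_sum H e K f s) (Inr False) = (Inl b, Inr (if s then d else c))"
  using assms by (simp_all add: two_sum_def)

lemma ts_inc:
  assumes "ends H e = (a,b)" "ends K f = (c,d)"
  shows "incident (two_sum H e K f s) (Inl v) (Inl (Inl h)) \<longleftrightarrow> incident H v h"
    "incident (two_sum H e K f s) (Inr w) (Inl (Inl h)) \<longleftrightarrow> False"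
    "incident (two_sum H e K f s) (Inl v) (Inl (Inr k)) \<longleftrightarrow> False"
    "incident (two_sum H e K f s) (Inr w) (Inl (Inr k)) \<longleftrightarrow> incident K w k"
    "incident (two_sum H e K f s) (Inl v) (Inr True) \<longleftrightarrow> v = a"
    "incident (two_sum H e K f s) (Inl v) (Inr False) \<longleftrightarrow> v = b"
    "incident (two_sum H e K f s) (Inr w) (Inr True) \<longleftrightarrow> w = (if s then c else d)"
    "incident (two_sum H e K f s) (Inr w) (Inr False) \<longleftrightarrow> w = (if s then d else c)"
  using assms by (auto simp add: ts_basic[OF assms] incident_def)

lemma ts_loop:
  assumes "ends H e = (a,b)" "ends K f = (c,d)" "a \<noteq> b"
  shows "is_loop (two_sum H e K f s) (Inl (Inl h)) \<longleftrightarrow> is_loop H h"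
    "is_loop (two_sum H e K f s) (Inl (Inr k)) \<longleftrightarrow> is_loop K k"
    "\<not> is_loop (two_sum H e K f s) (Inr t)"
  using assms by (cases t; auto simp add: ts_basic[OF assms(1,2)] is_loop_def)+

lemma degree_noloop:
  assumes "finite (edges G)" "\<forall>x\<in>edges G. \<not> is_loop G x"
  shows "degree G v = card {x\<in>edges G. incident G v x}"
proof -
  have "{x\<in>edges G. incident G v x} = {x\<in>edges G. fst (ends G x) = v} \<union> {x\<in>edges G. snd (ends G x) = v}"
    by (auto simp: incident_def)
  moreover have "{x\<in>edges G. fst (ends G x) = v} \<inter> {x\<in>edges G. snd (ends G x) = v} = {}"
    using assms(2) by (auto simp: is_loop_def)
  ultimately show ?thesis using assms(1) by (simp add: degree_def card_Un_disjoint)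
qed

lemma fiber_sum:
  assumes "finite N" "finite S"
  shows "(\<Sum>v\<in>S. card {x\<in>N. g x = v}) = card {x\<in>N. g x \<in> S}"
  using assms(2)
proof (induction S rule: finite_induct)
  case empty then show ?case by simp
next
  case (insert v S)
  have "{x\<in>N. g x \<in> insert v S} = {x\<in>N. g x = v} \<union> {x\<in>N. g x \<in> S}" by auto
  moreover have "{x\<in>N. g x = v} \<inter> {x\<in>N. g x \<in> S} = {}" using insert by auto
  ultimately have "card {x\<in>N. g x \<in> insert v S} = card {x\<in>N. g x = v} + card {x\<in>N. g x \<in> S}"
    using assms(1) by (simp add: card_Un_disjoint)
  then show ?case using insert by simp
qed

lemma match_count:
  assumes "finite N" "\<forall>x\<in>N. \<not> is_loop G x" "finite S"
    "\<forall>v\<in>S. card {x\<in>N. incident G v x} = 1"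
  shows "card S = card {x\<in>N. fst (ends G x) \<in> S} + card {x\<in>N. snd (ends G x) \<in> S}"
proof -
  have "card S = (\<Sum>v\<in>S. card {x\<in>N. incident G v x})" using assms(4) by simp
  also have "\<dots> = (\<Sum>v\<in>S. card {x\<in>N. fst (ends G x) = v} + card {x\<in>N. snd (ends G x) = v})"
  proof (rule sum.cong[OF refl])
    fix v
    have "{x\<in>N. incident G v x} = {x\<in>N. fst (ends G x) = v} \<union> {x\<in>N. snd (ends G x) = v}"
      by (auto simp: incident_def)
    moreover have "{x\<in>N. fst (ends G x) = v} \<inter> {x\<in>N. snd (ends G x) = v} = {}"
      using assms(2) by (auto simp: is_loop_def)
    ultimately show "card {x\<in>N. incident G v x} = card {x\<in>N. fst (ends G x) = v} + card {x\<in>N. snd (ends G x) = v}"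
      using assms(1) by (simp add: card_Un_disjoint)
  qed
  also have "\<dots> = card {x\<in>N. fst (ends G x) \<in> S} + card {x\<in>N. snd (ends G x) \<in> S}"
    by (simp add: sum.distrib fiber_sum[OF assms(1,3)])
  finally show ?thesis .
qed

lemma cubic_even:
  assumes "cubic H"
  shows "even (card (verts H))"
proof -
  have m: "mgraph H" using assms by (simp add: cubic_def)
  have "3 * card (verts H) = (\<Sum>v\<in>verts H. degree H v)" using assms by (simp add: cubic_def)
  also have "\<dots> = card {x\<in>edges H. fst (ends H x) \<in> verts H} + card {x\<in>edges H. snd (ends H x) \<in> verts H}"
    using m by (simp add: degree_def sum.distrib fiber_sum mgraph_def)
  also have "\<dots> = 2 * card (edges H)"
  proof -
    have "{x\<in>edges H. fst (ends H x) \<in> verts H} = edges H" "{x\<in>edges H. snd (ends H x) \<in> verts H} = edges H"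
      using m by (auto simp: mgraph_def)
    then show ?thesis by simp
  qed
  finally show ?thesis by presburger
qed

lemma cnt_H:
  assumes ab: "ends H e = (a,b)" and cd: "ends K f = (c,d)" and "a \<noteq> b"
    and "Inl (Inl e) \<notin> X" and "(Inr True \<in> X) = (Inr False \<in> X)"
  shows "card {x\<in>X. incident (two_sum H e K f s) (Inl v) x}
       = card {h \<in> {h. Inl (Inl h) \<in> X} \<union> (if Inr True \<in> X then {e} else {}). incident H v h}"
proof -
  let ?t = "\<lambda>h. if h = e then (if v = a then Inr True else Inr False) else Inl (Inl h)"
  let ?B = "{h \<in> {h. Inl (Inl h) \<in> X} \<union> (if Inr True \<in> X then {e} else {}). incident H v h}"
  let ?A = "{x\<in>X. incident (two_sum H e K f s) (Inl v) x}"
  have ie: "incident H v e \<longleftrightarrow> v = a \<or> v = b" using ab by (auto simp: incident_def)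
  have "bij_betw ?t ?B ?A"
  proof (rule bij_betw_imageI)
    show "inj_on ?t ?B" by (auto simp: inj_on_def split: if_splits)
    show "?t ` ?B = ?A"
    proof
      show "?t ` ?B \<subseteq> ?A"
        using assms ie by (auto simp: ts_inc[OF ab cd] split: if_splits)
    next
      show "?A \<subseteq> ?t ` ?B"
      proof
        fix x assume x: "x \<in> ?A"
        show "x \<in> ?t ` ?B"
        proof (cases x)
          case (Inl y)
          then show ?thesis
          proof (cases y)
            case (Inl h)
            then have "h \<noteq> e" using x \<open>x = Inl y\<close> assms(4) by auto
            then show ?thesis using x \<open>x = Inl y\<close> Inl
              by (auto simp: ts_inc[OF ab cd] image_iff intro!: bexI[of _ h])
          next
            case (Inr k) then show ?thesis using x \<open>x = Inl y\<close> by (simp add: ts_inc[OF ab cd])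
          qed
        next
          case (Inr t)
          then show ?thesis using x assms ie
            by (cases t) (auto simp: ts_inc[OF ab cd] image_iff intro!: bexI[of _ e])
        qed
      qed
    qed
  qed
  then show ?thesis by (simp add: bij_betw_same_card)
qed

lemma cnt_K:
  assumes ab: "ends H e = (a,b)" and cd: "ends K f = (c,d)" and "c \<noteq> d"
    and "Inl (Inr f) \<notin> X" and "(Inr True \<in> X) = (Inr False \<in> X)"
  shows "card {x\<in>X. incident (two_sum H e K f s) (Inr w) x}
       = card {k \<in> {k. Inl (Inr k) \<in> X} \<union> (if Inr True \<in> X then {f} else {}). incident K w k}"
proof -
  let ?t = "\<lambda>k. if k = f then (if w = (if s then c else d) then Inr True else Inr False) else Inl (Inr k)"
  let ?B = "{k \<in> {k. Inl (Inr k) \<in> X} \<union> (if Inr True \<in> X then {f} else {}). incident K w k}"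
  let ?A = "{x\<in>X. incident (two_sum H e K f s) (Inr w) x}"
  have ie: "incident K w f \<longleftrightarrow> w = c \<or> w = d" using cd by (auto simp: incident_def)
  have "bij_betw ?t ?B ?A"
  proof (rule bij_betw_imageI)
    show "inj_on ?t ?B" by (auto simp: inj_on_def split: if_splits)
    show "?t ` ?B = ?A"
    proof
      show "?t ` ?B \<subseteq> ?A"
        using assms ie by (auto simp: ts_inc[OF ab cd] split: if_splits)
    next
      show "?A \<subseteq> ?t ` ?B"
      proof
        fix x assume x: "x \<in> ?A"
        show "x \<in> ?t ` ?B"
        proof (cases x)
          case (Inl y)
          then show ?thesis
          proof (cases y)
            case (Inr k)
            then have "k \<noteq> f" using x \<open>x = Inl y\<close> assms(4) by auto
            then show ?thesis using x \<open>x = Inl y\<close> Inr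
              by (auto simp: ts_inc[OF ab cd] image_iff intro!: bexI[of _ k])
          next
            case (Inl h) then show ?thesis using x \<open>x = Inl y\<close> by (simp add: ts_inc[OF ab cd])
          qed
        next
          case (Inr t)
          then show ?thesis using x assms ie
            by (cases t; cases s) (auto simp: ts_inc[OF ab cd] image_iff intro!: bexI[of _ f])
        qed
      qed
    qed
  qed
  then show ?thesis by (simp add: bij_betw_same_card)
qed

lemma four_cases: "(\<exists>h. x = Inl (Inl h)) \<or> (\<exists>k. x = Inl (Inr k)) \<or> x = Inr True \<or> x = Inr False"
  by (metis (full_types) sum.exhaust)

lemma ts_fstS:
  assumes ab: "ends H e = (a,b)" and cd: "ends K f = (c,d)" and m: "mgraph H" and eH: "e \<in> edges H"
    and x: "x \<in> edges (two_sum H e K f s)"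
  shows "fst (ends (two_sum H e K f s) x) \<in> Inl ` verts H \<longleftrightarrow> (\<exists>h. x = Inl (Inl h)) \<or> x \<in> {Inr True, Inr False}"
    and "snd (ends (two_sum H e K f s) x) \<in> Inl ` verts H \<longleftrightarrow> (\<exists>h. x = Inl (Inl h))"
proof -
  have av: "a \<in> verts H" "b \<in> verts H" using m ab eH unfolding mgraph_def
    by (metis fst_conv snd_conv)+
  have "(fst (ends (two_sum H e K f s) x) \<in> Inl ` verts H \<longleftrightarrow> (\<exists>h. x = Inl (Inl h)) \<or> x \<in> {Inr True, Inr False}) \<and>
    (snd (ends (two_sum H e K f s) x) \<in> Inl ` verts H \<longleftrightarrow> (\<exists>h. x = Inl (Inl h)))"
    using four_cases[of x]
  proof (elim disjE exE)
    fix h assume h: "x = Inl (Inl h)"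
    then have "h \<in> edges H" using x by (auto simp: ts_basic[OF ab cd])
    then show ?thesis using m h by (simp add: ts_basic[OF ab cd] mgraph_def)
  next
    fix k assume "x = Inl (Inr k)"
    then show ?thesis by (auto simp: ts_basic[OF ab cd])
  next
    assume "x = Inr True" then show ?thesis using av by (auto simp: ts_basic[OF ab cd])
  next
    assume "x = Inr False" then show ?thesis using av by (auto simp: ts_basic[OF ab cd])
  qed
  then show "fst (ends (two_sum H e K f s) x) \<in> Inl ` verts H \<longleftrightarrow> (\<exists>h. x = Inl (Inl h)) \<or> x \<in> {Inr True, Inr False}"
    and "snd (ends (two_sum H e K f s) x) \<in> Inl ` verts H \<longleftrightarrow> (\<exists>h. x = Inl (Inl h))" by blast+
qed

lemma ts_parity:
  assumes ab: "ends H e = (a,b)" and cd: "ends K f = (c,d)" and "a \<noteq> b"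
    and cH: "cubic H" and fK: "finite (edges K)" and eH: "e \<in> edges H"
    and pm: "perfect_matching (two_sum H e K f s) N"
  shows "Inr True \<in> N \<longleftrightarrow> Inr False \<in> N"
proof -
  let ?G = "two_sum H e K f s"
  have m: "mgraph H" using cH by (simp add: cubic_def)
  have fE: "finite (edges ?G)" using m fK by (simp add: ts_basic[OF ab cd] mgraph_def)
  have NE: "N \<subseteq> edges ?G" using pm by (simp add: perfect_matching_def)
  have fN: "finite N" using NE fE finite_subset by blast
  let ?S = "Inl ` verts H :: ('a + 'c) set"
  have "card ?S = card {x\<in>N. fst (ends ?G x) \<in> ?S} + card {x\<in>N. snd (ends ?G x) \<in> ?S}"
  proof (rule match_count[OF fN])
    show "\<forall>x\<in>N. \<not> is_loop ?G x" using pm by (simp add: perfect_matching_def)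
    show "finite ?S" using m by (simp add: mgraph_def)
    show "\<forall>v\<in>?S. card {x\<in>N. incident ?G v x} = 1" using pm by (auto simp: perfect_matching_def ts_basic[OF ab cd])
  qed
  moreover have "card ?S = card (verts H)" by (simp add: card_image)
  moreover
  let ?NH = "{x\<in>N. \<exists>h. x = Inl (Inl h)}"
  let ?NT = "N \<inter> {Inr True, Inr False}"
  have "{x\<in>N. fst (ends ?G x) \<in> ?S} = ?NH \<union> ?NT"
  proof -
    have "fst (ends ?G x) \<in> ?S \<longleftrightarrow> (\<exists>h. x = Inl (Inl h)) \<or> x \<in> {Inr True, Inr False}" if "x \<in> N" for x
      using ts_fstS(1)[OF ab cd m eH] that NE by blast
    then show ?thesis by auto
  qed
  moreover have "{x\<in>N. snd (ends ?G x) \<in> ?S} = ?NH"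
  proof -
    have "snd (ends ?G x) \<in> ?S \<longleftrightarrow> (\<exists>h. x = Inl (Inl h))" if "x \<in> N" for x
      using ts_fstS(2)[OF ab cd m eH] that NE by blast
    then show ?thesis by auto
  qed
  moreover have "card (?NH \<union> ?NT) = card ?NH + card ?NT"
  proof (rule card_Un_disjoint)
    show "finite ?NH" using fN by simp
    show "finite ?NT" using fN by simp
    show "?NH \<inter> ?NT = {}" by blast
  qed
  ultimately have "card (verts H) = 2 * card ?NH + card ?NT" by simp
  with cubic_even[OF cH] have ev: "even (card ?NT)" by presburger
  show ?thesis
  proof (rule ccontr)
    assume "\<not> ?thesis"
    then have "?NT = {Inr True} \<or> ?NT = {Inr False}" by auto
    then have "card ?NT = 1" by (elim disjE) simp_all
    with ev show False by simp
  qed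
qed

definition rho :: "'e \<Rightarrow> (('e + 'f) + bool) set \<Rightarrow> 'e set" where
  "rho e N = {h. Inl (Inl h) \<in> N} \<union> (if Inr True \<in> N then {e} else {})"

definition Phi :: "'e \<Rightarrow> 'f \<Rightarrow> 'e set \<Rightarrow> 'f set \<Rightarrow> (('e + 'f) + bool) set" where
  "Phi e f M L = Inl ` Inl ` (M - {e}) \<union> Inl ` Inr ` (L - {f}) \<union> (if e \<in> M then {Inr True, Inr False} else {})"

lemma rest_pm:
  assumes ab: "ends H e = (a,b)" and cd: "ends K f = (c,d)" and "a \<noteq> b"
    and cH: "cubic H" and fK: "finite (edges K)" and eH: "e \<in> edges H"
    and nl: "\<not> is_loop H e"
    and pm: "perfect_matching (two_sum H e K f s) N"
  shows "perfect_matching H (rho e N)"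
proof -
  let ?G = "two_sum H e K f s"
  have NE: "N \<subseteq> edges ?G" using pm by (simp add: perfect_matching_def)
  have par: "Inr True \<in> N \<longleftrightarrow> Inr False \<in> N" by (rule ts_parity[OF ab cd assms(3) cH fK eH pm])
  have ne: "Inl (Inl e) \<notin> N" using NE by (auto simp: ts_basic[OF ab cd])
  show ?thesis unfolding perfect_matching_def
  proof (intro conjI ballI)
    show "rho e N \<subseteq> edges H" using NE eH by (auto simp: rho_def ts_basic[OF ab cd])
  next
    fix h assume "h \<in> rho e N"
    then show "\<not> is_loop H h"
    proof (cases "h = e")
      case False
      with \<open>h \<in> rho e N\<close> have "Inl (Inl h) \<in> N" by (auto simp: rho_def split: if_splits)
      then have "\<not> is_loop ?G (Inl (Inl h))" using pm by (auto simp: perfect_matching_def)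
      then show ?thesis by (simp add: ts_loop[OF ab cd assms(3)])
    qed (use nl in simp)
  next
    fix v assume v: "v \<in> verts H"
    have "card {h\<in>rho e N. incident H v h} = card {x\<in>N. incident ?G (Inl v) x}"
      using cnt_H[OF ab cd assms(3) ne par] by (simp add: rho_def)
    also have "\<dots> = 1" using pm v by (auto simp: perfect_matching_def ts_basic[OF ab cd])
    finally show "card {h\<in>rho e N. incident H v h} = 1" .
  qed
qed

lemma ext_pm:
  assumes ab: "ends H e = (a,b)" and cd: "ends K f = (c,d)" and "a \<noteq> b" and "c \<noteq> d"
    and pmM: "perfect_matching H M" and pmL: "perfect_matching K L"
    and ef: "e \<in> M \<longleftrightarrow> f \<in> L"
  shows "perfect_matching (two_sum H e K f s) (Phi e f M L)"
proof -
  let ?G = "two_sum H e K f s"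
  let ?X = "Phi e f M L"
  have ne: "Inl (Inl e) \<notin> ?X" "Inl (Inr f) \<notin> ?X" by (auto simp: Phi_def)
  have par: "(Inr True \<in> ?X) = (Inr False \<in> ?X)" by (auto simp: Phi_def)
  have rX: "{h \<in> {h. Inl (Inl h) \<in> ?X} \<union> (if Inr True \<in> ?X then {e} else {}). incident H v h}
     = {h\<in>M. incident H v h}" for v
    by (auto simp: Phi_def split: if_splits)
  have sX: "{k \<in> {k. Inl (Inr k) \<in> ?X} \<union> (if Inr True \<in> ?X then {f} else {}). incident K w k}
     = {k\<in>L. incident K w k}" for w
    using ef by (auto simp: Phi_def split: if_splits)
  show ?thesis unfolding perfect_matching_def
  proof (intro conjI ballI)
    have "M \<subseteq> edges H" "L \<subseteq> edges K" using pmM pmL by (auto simp: perfect_matching_def)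
    then have s12: "Inl ` Inl ` (M - {e}) \<subseteq> Inl ` (Inl ` (edges H - {e}) \<union> Inr ` (edges K - {f}))"
      "Inl ` Inr ` (L - {f}) \<subseteq> Inl ` (Inl ` (edges H - {e}) \<union> Inr ` (edges K - {f}))"
      by (intro image_mono; blast)+
    have s3: "(if e\<in>M then {Inr True, Inr False} else {}) \<subseteq> {Inr True, Inr False}" by simp
    show "?X \<subseteq> edges ?G" unfolding Phi_def ts_basic[OF ab cd]
      by (intro le_supI; (rule le_supI1, rule s12(1))?; (rule le_supI1, rule s12(2))?; (rule le_supI2, rule s3)?)
  next
    fix x assume "x \<in> ?X"
    then show "\<not> is_loop ?G x" using pmM pmL
      by (auto simp: Phi_def ts_loop[OF ab cd assms(3)] perfect_matching_def split: if_splits)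
  next
    fix u assume u: "u \<in> verts ?G"
    show "card {x\<in>?X. incident ?G u x} = 1"
    proof (cases u)
      case (Inl v)
      then have "v \<in> verts H" using u by (auto simp: ts_basic[OF ab cd])
      then show ?thesis using cnt_H[OF ab cd assms(3) ne(1) par, of s v] rX[of v] pmM Inl
        by (simp add: perfect_matching_def)
    next
      case (Inr w)
      then have "w \<in> verts K" using u by (auto simp: ts_basic[OF ab cd])
      then show ?thesis using cnt_K[OF ab cd assms(4) ne(2) par, of s w] sX[of w] pmL Inr
        by (simp add: perfect_matching_def)
    qed
  qed
qed

lemma colour_pm:
  fixes c :: "'f \<Rightarrow> nat"
  assumes cK: "cubic K" and col: "\<forall>e \<in> edges K. c e < 3 \<and> \<not> is_loop K e"
    "\<forall>e \<in> edges K. \<forall>e' \<in> edges K. e \<noteq> e' \<and> (\<exists>v. incident K v e \<and> incident K v e') \<longrightarrow> c e \<noteq> c e'"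
    and j: "j < 3"
  shows "perfect_matching K {k\<in>edges K. c k = j}"
  unfolding perfect_matching_def
proof (intro conjI ballI)
  show "{k\<in>edges K. c k = j} \<subseteq> edges K" by auto
  show "\<And>x. x \<in> {k\<in>edges K. c k = j} \<Longrightarrow> \<not> is_loop K x" using col by auto
next
  fix w assume w: "w \<in> verts K"
  have fE: "finite (edges K)" using cK by (simp add: cubic_def mgraph_def)
  let ?I = "{x\<in>edges K. incident K w x}"
  have c3: "card ?I = 3" using degree_noloop[OF fE, of w] col(1) cK w by (simp add: cubic_def)
  have inj: "inj_on c ?I" using col(2) by (auto simp: inj_on_def)
  have "c ` ?I \<subseteq> {0,1,2}" using col(1) by auto
  moreover have "card (c ` ?I) = 3" using card_image[OF inj] c3 by simp
  ultimately have "c ` ?I = {0,1,2}"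
    by (intro card_subset_eq) auto
  then have "j \<in> c ` ?I" using j by auto
  then obtain k where k: "k \<in> ?I" "c k = j" by auto
  have "{x\<in>{k\<in>edges K. c k = j}. incident K w x} = {k}"
    using k inj by (auto simp: inj_on_def)
  then show "card {x\<in>{k\<in>edges K. c k = j}. incident K w x} = 1" by simp
qed

lemma rho_Phi: "rho e (Phi e f M L) = M"
  by (auto simp: rho_def Phi_def)

lemma card1_eq: "card S = 1 \<Longrightarrow> x \<in> S \<Longrightarrow> y \<in> S \<Longrightarrow> x = y"
  by (metis card_1_singletonE singletonD)

lemma claimB:
  assumes ab: "ends H e = (a,b)" and cd: "ends K f = (c,d)" and "a \<noteq> b"
    and cH: "cubic H" and fK: "finite (edges K)" and eH: "e \<in> edges H"
    and nl: "\<not> is_loop H e"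
    and Ns: "finite Ns" "\<forall>N\<in>Ns. perfect_matching (two_sum H e K f s) N" "\<Union> Ns = edges (two_sum H e K f s)"
  shows "\<exists>Ms. finite Ms \<and> card Ms \<le> card Ns \<and> (\<forall>M\<in>Ms. perfect_matching H M) \<and> \<Union> Ms = edges H"
proof (intro exI conjI)
  let ?Ms = "rho e ` Ns"
  show "finite ?Ms" using Ns by simp
  show "card ?Ms \<le> card Ns" using Ns by (simp add: card_image_le)
  show pms: "\<forall>M\<in>?Ms. perfect_matching H M" using rest_pm[OF ab cd assms(3) cH fK eH nl] Ns by blast
  show "\<Union> ?Ms = edges H"
  proof
    show "\<Union> ?Ms \<subseteq> edges H" using pms by (auto simp: perfect_matching_def)
  next
    show "edges H \<subseteq> \<Union> ?Ms"
    proof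
      fix h assume h: "h \<in> edges H"
      show "h \<in> \<Union> ?Ms"
      proof (cases "h = e")
        case True
        have "Inr True \<in> edges (two_sum H e K f s)" by (simp add: ts_basic[OF ab cd])
        then obtain N where "N \<in> Ns" "Inr True \<in> N" using Ns(3) by blast
        then show ?thesis using True by (auto simp: rho_def)
      next
        case False
        have "Inl (Inl h) \<in> edges (two_sum H e K f s)" using h False by (simp add: ts_basic[OF ab cd])
        then obtain N where "N \<in> Ns" "Inl (Inl h) \<in> N" using Ns(3) by blast
        then show ?thesis by (auto simp: rho_def)
      qed
    qed
  qed
qed

lemma two_free:
  assumes ab: "ends H e = (a,b)" and cH: "cubic H" and eH: "e \<in> edges H"
    and nlH: "\<forall>x\<in>edges H. \<not> is_loop H x"
    and Ms: "\<forall>M\<in>Ms. perfect_matching H M" "\<Union> Ms = edges H"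
  shows "\<exists>M1\<in>Ms. \<exists>M2\<in>Ms. M1 \<noteq> M2 \<and> e \<notin> M1 \<and> e \<notin> M2"
proof -
  have m: "mgraph H" using cH by (simp add: cubic_def)
  have fE: "finite (edges H)" using m by (simp add: mgraph_def)
  have av: "a \<in> verts H" using m ab eH unfolding mgraph_def by (metis fst_conv)
  let ?I = "{x\<in>edges H. incident H a x}"
  have "card ?I = 3" using degree_noloop[OF fE nlH, of a] cH av by (simp add: cubic_def)
  moreover have eI: "e \<in> ?I" using eH ab by (simp add: incident_def)
  ultimately have "card (?I - {e}) = 2" using fE by simp
  then obtain x1 x2 where xx: "?I - {e} = {x1, x2}" "x1 \<noteq> x2"
    unfolding card_2_iff by blast
  then have x: "x1 \<noteq> x2" "x1 \<in> ?I - {e}" "x2 \<in> ?I - {e}" by auto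
  obtain M1 where M1: "M1 \<in> Ms" "x1 \<in> M1" using x Ms(2) by blast
  obtain M2 where M2: "M2 \<in> Ms" "x2 \<in> M2" using x Ms(2) by blast
  have c1: "card {h\<in>M1. incident H a h} = 1" "card {h\<in>M2. incident H a h} = 1"
    using Ms(1) M1 M2 av by (auto simp: perfect_matching_def)
  have "e \<notin> M1" using card1_eq[OF c1(1), of e x1] x M1 eI by auto
  moreover have "e \<notin> M2" using card1_eq[OF c1(2), of e x2] x M2 eI by auto
  moreover have "M1 \<noteq> M2" using card1_eq[OF c1(1), of x1 x2] x M1 M2 by auto
  ultimately show ?thesis using M1 M2 by blast
qed

lemma three_cases:
  assumes "(j0::nat) < 3"
  obtains j1 j2 where "j1 < 3" "j2 < 3" "j1 \<noteq> j0" "j2 \<noteq> j0" "j1 \<noteq> j2"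
    "\<And>j. j < 3 \<Longrightarrow> j = j0 \<or> j = j1 \<or> j = j2"
proof -
  consider "j0 = 0" | "j0 = 1" | "j0 = 2" using assms by linarith
  then show ?thesis
  proof cases
    case 1 then show ?thesis using that[of 1 2] by linarith
  next
    case 2 then show ?thesis using that[of 0 2] by linarith
  next
    case 3 then show ?thesis using that[of 0 1] by linarith
  qed
qed

lemma claimA:
  assumes ab: "ends H e = (a,b)" and cd: "ends K f = (c,d)" and "a \<noteq> b" and "c \<noteq> d"
    and cH: "cubic H" and cK: "cubic K" and eH: "e \<in> edges H" and fK: "f \<in> edges K"
    and nlH: "\<forall>x\<in>edges H. \<not> is_loop H x"
    and col3: "three_edge_colourable K"
    and Ms: "finite Ms" "\<forall>M\<in>Ms. perfect_matching H M" "\<Union> Ms = edges H"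
  shows "\<exists>Ns. finite Ns \<and> card Ns = card Ms \<and> (\<forall>N\<in>Ns. perfect_matching (two_sum H e K f s) N)
            \<and> \<Union> Ns = edges (two_sum H e K f s)"
proof -
  obtain col :: "_ \<Rightarrow> nat" where col: "\<forall>x \<in> edges K. col x < 3 \<and> \<not> is_loop K x"
    "\<forall>x \<in> edges K. \<forall>y \<in> edges K. x \<noteq> y \<and> (\<exists>v. incident K v x \<and> incident K v y) \<longrightarrow> col x \<noteq> col y"
    using col3 unfolding three_edge_colourable_def by blast
  define j0 where "j0 = col f"
  have j0: "j0 < 3" using col fK by (simp add: j0_def)
  obtain j1 j2 where j: "j1 < 3" "j2 < 3" "j1 \<noteq> j0" "j2 \<noteq> j0" "j1 \<noteq> j2"
    "\<And>j. j < 3 \<Longrightarrow> j = j0 \<or> j = j1 \<or> j = j2" using three_cases[OF j0] by blast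
  define C where "C j = {k\<in>edges K. col k = j}" for j
  have Cpm: "j < 3 \<Longrightarrow> perfect_matching K (C j)" for j
    unfolding C_def by (rule colour_pm[OF cK col])
  obtain M1 M2 where M12: "M1 \<in> Ms" "M2 \<in> Ms" "M1 \<noteq> M2" "e \<notin> M1" "e \<notin> M2"
    using two_free[OF ab cH eH nlH Ms(2,3)] by blast
  obtain M0 where M0: "M0 \<in> Ms" "e \<in> M0" using eH Ms(3) by blast
  define L where "L M = (if e \<in> M then C j0 else if M = M2 then C j2 else C j1)" for M
  have Lpm: "perfect_matching K (L M)" for M using Cpm j j0 by (simp add: L_def)
  have Lf: "e \<in> M \<longleftrightarrow> f \<in> L M" for M using j fK by (simp add: L_def C_def j0_def)
  define Phi' where "Phi' M = Phi e f M (L M)" for M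
  let ?Ns = "Phi' ` Ms"
  show ?thesis
  proof (intro exI conjI)
    show "finite ?Ns" using Ms by simp
    have "inj_on Phi' Ms" by (rule inj_on_inverseI[of _ "rho e"]) (simp add: Phi'_def rho_Phi)
    then show "card ?Ns = card Ms" by (simp add: card_image)
    show pms: "\<forall>N\<in>?Ns. perfect_matching (two_sum H e K f s) N"
      using ext_pm[OF ab cd assms(3,4)] Ms(2) Lpm Lf by (auto simp: Phi'_def)
    show "\<Union> ?Ns = edges (two_sum H e K f s)"
    proof
      show "\<Union> ?Ns \<subseteq> edges (two_sum H e K f s)" using pms by (auto simp: perfect_matching_def)
    next
      show "edges (two_sum H e K f s) \<subseteq> \<Union> ?Ns"
      proof
        fix x assume x: "x \<in> edges (two_sum H e K f s)"
        show "x \<in> \<Union> ?Ns"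
          using four_cases[of x]
        proof (elim disjE exE)
          fix h assume h: "x = Inl (Inl h)"
          then have "h \<in> edges H" "h \<noteq> e" using x by (auto simp: ts_basic[OF ab cd])
          then obtain M where "M \<in> Ms" "h \<in> M" using Ms(3) by blast
          then have "x \<in> Phi' M" using h \<open>h \<noteq> e\<close> by (auto simp: Phi'_def Phi_def)
          then show ?thesis using \<open>M \<in> Ms\<close> by blast
        next
          fix k assume k: "x = Inl (Inr k)"
          then have kK: "k \<in> edges K" "k \<noteq> f" using x by (auto simp: ts_basic[OF ab cd])
          then have "col k < 3" using col by blast
          then have "col k = j0 \<or> col k = j1 \<or> col k = j2" using j(6) by blast
          then obtain M where "M \<in> Ms" "k \<in> L M"
          proof (elim disjE)
            assume "col k = j0" then show ?thesis using that[of M0] M0 kK by (simp add: L_def C_def)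
          next
            assume "col k = j1" then show ?thesis using that[of M1] M12 kK by (simp add: L_def C_def)
          next
            assume "col k = j2" then show ?thesis using that[of M2] M12 kK by (simp add: L_def C_def)
          qed
          then have "x \<in> Phi' M" using k kK by (auto simp: Phi'_def Phi_def)
          then show ?thesis using \<open>M \<in> Ms\<close> by blast
        next
          assume "x = Inr True"
          then have "x \<in> Phi' M0" using M0 by (simp add: Phi'_def Phi_def)
          then show ?thesis using M0 by blast
        next
          assume "x = Inr False"
          then have "x \<in> Phi' M0" using M0 by (simp add: Phi'_def Phi_def)
          then show ?thesis using M0 by blast
        qed
      qed
    qed
  qed
qed

theorem lemma6p4:
  fixes H :: "('v, 'e) mgraph" and K :: "('w, 'f) mgraph"
    and e :: 'e and f :: 'f and s :: bool
  assumes "cubic H" and "cubic K"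
    and "two_connected H" and "two_connected K"
    and "three_edge_colourable K"
    and "e \<in> edges H" and "f \<in> edges K"
  shows "5 \<le> pm_index (two_sum H e K f s) \<longleftrightarrow> 5 \<le> pm_index H"
proof -
  obtain a b where ab: "ends H e = (a,b)" by (cases "ends H e")
  obtain c d where cd: "ends K f = (c,d)" by (cases "ends K f")
  have nlH: "\<forall>x\<in>edges H. \<not> is_loop H x" using assms(3) by (simp add: two_connected_def)
  have nlK: "\<forall>x\<in>edges K. \<not> is_loop K x" using assms(4) by (simp add: two_connected_def)
  have "a \<noteq> b" using bspec[OF nlH assms(6)] ab by (simp add: is_loop_def)
  have "c \<noteq> d" using bspec[OF nlK assms(7)] cd by (simp add: is_loop_def)
  have fK: "finite (edges K)" using assms(2) by (simp add: cubic_def mgraph_def)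
  let ?G = "two_sum H e K f s"
  define PG where "PG k = (\<exists>Ms. finite Ms \<and> card Ms = k \<and> (\<forall>M \<in> Ms. perfect_matching ?G M) \<and> \<Union> Ms = edges ?G)" for k
  define PH where "PH k = (\<exists>Ms. finite Ms \<and> card Ms = k \<and> (\<forall>M \<in> Ms. perfect_matching H M) \<and> \<Union> Ms = edges H)" for k
  have A: "PH k \<Longrightarrow> PG k" for k
    unfolding PH_def PG_def
    using claimA[OF ab cd \<open>a \<noteq> b\<close> \<open>c \<noteq> d\<close> assms(1,2,6,7) nlH assms(5)] by metis
  have B: "PG k \<Longrightarrow> \<exists>j\<le>k. PH j" for k
    unfolding PH_def PG_def
    using claimB[OF ab cd \<open>a \<noteq> b\<close> assms(1) fK assms(6) bspec[OF nlH assms(6)]] by metis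
  have gi: "pm_index ?G = Least PG" by (simp add: pm_index_def PG_def[abs_def])
  have hi: "pm_index H = Least PH" by (simp add: pm_index_def PH_def[abs_def])
  have "Least PG = Least PH"
  proof (cases "\<exists>k. PH k")
    case True
    then have PHm: "PH (Least PH)" by (metis LeastI)
    then have "PG (Least PH)" by (rule A)
    then have le1: "Least PG \<le> Least PH" by (rule Least_le)
    have "PG (Least PG)" using \<open>PG (Least PH)\<close> by (metis LeastI)
    then obtain j where "j \<le> Least PG" "PH j" using B by blast
    then have "Least PH \<le> Least PG" using Least_le[of PH j] by linarith
    with le1 show ?thesis by simp
  next
    case False
    then have "\<not> PG k" for k using B by blast
    then have "PG = PH" using False by blast
    then show ?thesis by simp
  qed
  then show ?thesis using gi hi by simp
qed
end
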